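(* Let $t\in\mathbb{R}$ be such that $\beta_X<h(t)<\infty$ and $E[e^{tY-h(t)X}]=1$. Suppose that either (1) $\Pr\{X\ge0\}=1$, or (2) $\mathcal{D}_t^\circ\ne\emptyset$ and $E[e^{q(tY-(0\wedge h(t))X)}\mid X>0]<\infty$ for all $q>0$. Then $\frac1x\log M_x(t)\to h(t)$ as $x\to\infty$.
   Context: $(X_n,Y_n)_{n\ge1}$ are i.i.d. copies of $(X,Y)\in\mathbb{R}^2$; $X,Y$ nondegenerate and $\Pr\{\sup_{n\ge1}\sum_{i=1}^nX_i=\infty\}=1$. For $x\ge0$, $N(x)=\max\{n:\sum_{i=1}^kX_i\le x\ \forall k\le n\}$ if $X_1\le x$, else $N(x)=0$; $W(x)=\sum_{i=1}^{N(x)}Y_i$; $M_x(t)=E[e^{tW(x)}]$. $\mathcal{D}_t=\{s:E[e^{tY-sX}]\le1\}$, $h(t)=\inf\mathcal{D}_t$ ($\inf\emptyset=\infty$), $\beta_X=\limsup_{x\to\infty}\frac1x\log\Pr\{X>x\}$. $A^\circ$ is the interior of $A$, $a\wedge b=\min\{a,b\}$. *)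

theory Defs
  imports "HOL-Probability.Probability"
begin

text \<open>Index convention: the i.i.d. pairs (X_1,Y_1),(X_2,Y_2),... are X 0, Y 0, X 1, Y 1, ...
  so that X_{i+1} = X i. The generic pair (X,Y) is (X 0, Y 0).\<close>

definition Nfun :: "(nat \<Rightarrow> 'a \<Rightarrow> real) \<Rightarrow> real \<Rightarrow> 'a \<Rightarrow> nat" where
  "Nfun X x \<omega> = (GREATEST n. \<forall>k\<in>{1..n}. (\<Sum>i<k. X i \<omega>) \<le> x)"

definition Wfun :: "(nat \<Rightarrow> 'a \<Rightarrow> real) \<Rightarrow> (nat \<Rightarrow> 'a \<Rightarrow> real) \<Rightarrow> real \<Rightarrow> 'a \<Rightarrow> real" where
  "Wfun X Y x \<omega> = (\<Sum>i<Nfun X x \<omega>. Y i \<omega>)"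

definition Mgf :: "'a measure \<Rightarrow> (nat \<Rightarrow> 'a \<Rightarrow> real) \<Rightarrow> (nat \<Rightarrow> 'a \<Rightarrow> real) \<Rightarrow> real \<Rightarrow> real \<Rightarrow> ennreal" where
  "Mgf M X Y x t = (\<integral>\<^sup>+ \<omega>. ennreal (exp (t * Wfun X Y x \<omega>)) \<partial>M)"

definition Lap :: "'a measure \<Rightarrow> ('a \<Rightarrow> real) \<Rightarrow> ('a \<Rightarrow> real) \<Rightarrow> real \<Rightarrow> real \<Rightarrow> ennreal" where
  "Lap M X Y t s = (\<integral>\<^sup>+ \<omega>. ennreal (exp (t * Y \<omega> - s * X \<omega>)) \<partial>M)"

definition Dset :: "'a measure \<Rightarrow> ('a \<Rightarrow> real) \<Rightarrow> ('a \<Rightarrow> real) \<Rightarrow> real \<Rightarrow> real set" where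
  "Dset M X Y t = {s. Lap M X Y t s \<le> 1}"

text \<open>h(t) = inf D_t, with inf of the empty set = +infinity.\<close>
definition hfun :: "'a measure \<Rightarrow> ('a \<Rightarrow> real) \<Rightarrow> ('a \<Rightarrow> real) \<Rightarrow> real \<Rightarrow> ereal" where
  "hfun M X Y t = Inf (ereal ` Dset M X Y t)"

definition elog :: "real \<Rightarrow> ereal" where
  "elog p = (if p \<le> 0 then -\<infinity> else ereal (ln p))"

definition betaX :: "'a measure \<Rightarrow> ('a \<Rightarrow> real) \<Rightarrow> ereal" where
  "betaX M X = Limsup at_top (\<lambda>x::real. ereal (1 / x) * elog (measure M {\<omega>\<in>space M. X \<omega> > x}))"

definition cond_exp_event :: "'a measure \<Rightarrow> ('a \<Rightarrow> real) \<Rightarrow> 'a set \<Rightarrow> ennreal" where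
  "cond_exp_event M f A = (\<integral>\<^sup>+ \<omega>. ennreal (f \<omega>) * indicator A \<omega> \<partial>M) / ennreal (measure M A)"

end

theory Submission
  imports Defs
begin

lemma fst_borel: "(fst :: real\<times>real \<Rightarrow> real) \<in> borel_measurable borel"
  by (subst borel_prod[symmetric]) measurable
lemma snd_borel: "(snd :: real\<times>real \<Rightarrow> real) \<in> borel_measurable borel"
  by (subst borel_prod[symmetric]) measurable
lemma comp_fst[measurable]: "i \<in> I \<Longrightarrow> (\<lambda>v. fst (v i)) \<in> borel_measurable (PiM I (\<lambda>_. (borel::(real\<times>real) measure)))"
  using measurable_component_singleton[of i I "\<lambda>_. borel"] fst_borel by (rule measurable_compose)

definition BK :: "real \<Rightarrow> (real \<times> real) set" where
  "BK K = {z. \<bar>fst z\<bar> \<le> K \<and> \<bar>snd z\<bar> \<le> K}"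

lemma BK_borel[measurable]: "BK K \<in> sets borel"
proof -
  have "BK K = (fst -` {-K..K}) \<inter> (snd -` {-K..K})" by (auto simp: BK_def abs_le_iff)
  also have "\<dots> \<in> sets borel"
    by (intro sets.Int measurable_sets_borel[OF fst_borel] measurable_sets_borel[OF snd_borel]) auto
  finally show ?thesis .
qed
definition gK :: "real \<Rightarrow> real \<Rightarrow> real \<Rightarrow> real \<times> real \<Rightarrow> ennreal" where
  "gK t s K z = ennreal (exp (t * snd z - s * fst z)) * indicator (BK K) z"

lemma gK_meas[measurable]: "gK t s K \<in> borel_measurable borel"
proof -
  have "(\<lambda>z::real\<times>real. ennreal (exp (t * snd z - s * fst z))) \<in> borel_measurable borel"
    by (subst borel_prod[symmetric]) measurable
  moreover have "(indicator (BK K) :: real\<times>real \<Rightarrow> ennreal) \<in> borel_measurable borel"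
    by measurable
  ultimately show ?thesis unfolding gK_def by measurable
qed

lemma prod_gK: "(\<Prod>i<(n::nat). gK t s K (z i)) =
   (if \<forall>i<n. z i \<in> BK K then ennreal (exp (\<Sum>i<n. t * snd (z i) - s * fst (z i))) else 0)"
proof (induction n)
  case (Suc n)
  show ?case
  proof (cases "\<forall>i<Suc n. z i \<in> BK K")
    case True
    then have a: "\<forall>i<n. z i \<in> BK K" and b: "z n \<in> BK K" by auto
    have g: "gK t s K (z n) = ennreal (exp (t * snd (z n) - s * fst (z n)))"
      using b by (simp add: gK_def)
    have IH: "(\<Prod>i<n. gK t s K (z i)) = ennreal (exp (\<Sum>i<n. t * snd (z i) - s * fst (z i)))"
      using Suc.IH by (simp only: if_P[OF a])
    have "(\<Prod>i<Suc n. gK t s K (z i)) = ennreal (exp (\<Sum>i<n. t * snd (z i) - s * fst (z i))) * ennreal (exp (t * snd (z n) - s * fst (z n)))"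
      by (simp only: prod.lessThan_Suc IH g)
    also have "\<dots> = ennreal (exp (\<Sum>i<Suc n. t * snd (z i) - s * fst (z i)))"
      by (simp only: sum.lessThan_Suc exp_add ennreal_mult[symmetric] exp_ge_zero)
    finally show ?thesis by (simp only: if_P[OF True])
  next
    case False
    have "(\<Prod>i<n. gK t s K (z i)) * gK t s K (z n) = 0"
    proof (cases "\<forall>i<n. z i \<in> BK K")
      case True
      then have "z n \<notin> BK K" using False by (metis less_Suc_eq)
      then show ?thesis by (simp add: gK_def)
    next
      case False
      then show ?thesis by (simp only: Suc.IH if_not_P[OF False] mult_zero_left if_False)
    qed
    then show ?thesis by (simp only: prod.lessThan_Suc if_not_P[OF False])
  qed
qed simp


lemma tail_bound:
  assumes P: "prob_space M" and Zm[measurable]: "Z \<in> borel_measurable M"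
    and b: "betaX M Z < ereal r"
  shows "\<exists>x0>0. \<forall>x\<ge>x0. measure M {\<omega>\<in>space M. Z \<omega> > x} \<le> exp (r * x)"
proof -
  have "\<forall>\<^sub>F x in at_top. ereal (1 / x) * elog (measure M {\<omega>\<in>space M. Z \<omega> > x}) < ereal r"
    using Limsup_lessD[OF b[unfolded betaX_def]] .
  then obtain x1 where x1: "\<And>x. x \<ge> x1 \<Longrightarrow> ereal (1 / x) * elog (measure M {\<omega>\<in>space M. Z \<omega> > x}) < ereal r"
    by (auto simp: eventually_at_top_linorder)
  define x0 where "x0 = max x1 1"
  have "\<forall>x\<ge>x0. measure M {\<omega>\<in>space M. Z \<omega> > x} \<le> exp (r * x)"
  proof (intro allI impI)
    fix x assume x: "x0 \<le> x"
    then have xpos: "0 < x" and xx1: "x1 \<le> x" by (auto simp: x0_def)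
    define p where "p = measure M {\<omega>\<in>space M. Z \<omega> > x}"
    show "p \<le> exp (r * x)"
    proof (cases "p \<le> 0")
      case True then show ?thesis by (meson exp_ge_zero order_trans)
    next
      case False
      have "ereal (1 / x) * ereal (ln p) < ereal r" using x1[OF xx1] False by (simp add: p_def elog_def)
      then have "ln p / x < r" by simp
      then have "ln p < r * x" using xpos by (simp add: divide_less_eq)
      then have "exp (ln p) < exp (r * x)" by simp
      then show ?thesis using False by simp
    qed
  qed
  moreover have "0 < x0" by (simp add: x0_def)
  ultimately show ?thesis unfolding x0_def by blast
qed

lemma tail_int:
  assumes P: "prob_space M" and Zm[measurable]: "Z \<in> borel_measurable M"
    and b: "betaX M Z < ereal r" and ar: "a + r < 0" and a: "0 < a"
  shows "(\<integral>\<^sup>+\<omega>. ennreal (exp (a * Z \<omega>)) \<partial>M) < \<infinity>"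
proof -
  interpret prob_space M by (rule P)
  obtain x0 where x0: "0 < x0" "\<And>x. x \<ge> x0 \<Longrightarrow> measure M {\<omega>\<in>space M. Z \<omega> > x} \<le> exp (r * x)"
    using tail_bound[OF P Zm b] by blast
  define k0 :: nat where "k0 = nat \<lceil>x0\<rceil>"
  have k0: "x0 \<le> real k0" unfolding k0_def by linarith
  define S where "S k = {\<omega>\<in>space M. Z \<omega> > real k0 + real k}" for k :: nat
  have Sm[measurable]: "S k \<in> sets M" for k unfolding S_def by measurable
  define f where "f k \<omega> = ennreal (exp (a * (real k0 + real k + 1))) * indicator (S k) \<omega>" for k \<omega>
  have pw: "ennreal (exp (a * Z \<omega>)) \<le> ennreal (exp (a * real k0)) + (\<Sum>k. f k \<omega>)" if sp: "\<omega> \<in> space M" for \<omega>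
  proof (cases "Z \<omega> \<le> real k0")
    case True
    then have "ennreal (exp (a * Z \<omega>)) \<le> ennreal (exp (a * real k0))"
      using a by (intro ennreal_leI) simp
    then show ?thesis by (rule add_increasing2[OF zero_le])
  next
    case False
    define j where "j = nat (\<lceil>Z \<omega>\<rceil> - int k0 - 1)"
    have "int k0 < \<lceil>Z \<omega>\<rceil>" using False by (simp add: less_ceiling_iff)
    then have c1: "real_of_int \<lceil>Z \<omega>\<rceil> \<ge> real k0 + 1" by linarith
    have jeq: "real k0 + real j + 1 = real_of_int \<lceil>Z \<omega>\<rceil>" unfolding j_def using c1 by (simp add: of_nat_nat)
    have "\<omega> \<in> S j" unfolding S_def using sp jeq by (auto, linarith)
    then have fj: "f j \<omega> = ennreal (exp (a * real_of_int \<lceil>Z \<omega>\<rceil>))" by (simp add: f_def jeq)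
    have "ennreal (exp (a * Z \<omega>)) \<le> f j \<omega>" unfolding fj
      using a by (intro ennreal_leI) simp
    also have "\<dots> \<le> (\<Sum>k. f k \<omega>)"
      using sum_le_suminf[of "\<lambda>k. f k \<omega>" "{j}"] by simp
    finally show ?thesis by (rule add_increasing[OF zero_le])
  qed
  have "(\<integral>\<^sup>+\<omega>. ennreal (exp (a * Z \<omega>)) \<partial>M) \<le> (\<integral>\<^sup>+\<omega>. ennreal (exp (a * real k0)) + (\<Sum>k. f k \<omega>) \<partial>M)"
    by (intro nn_integral_mono pw)
  also have "\<dots> = ennreal (exp (a * real k0)) + (\<Sum>k. \<integral>\<^sup>+\<omega>. f k \<omega> \<partial>M)"
  proof -
    have fm[measurable]: "f k \<in> borel_measurable M" for k unfolding f_def by measurable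
    have "(\<integral>\<^sup>+\<omega>. ennreal (exp (a * real k0)) + (\<Sum>k. f k \<omega>) \<partial>M) = (\<integral>\<^sup>+\<omega>. ennreal (exp (a * real k0)) \<partial>M) + (\<integral>\<^sup>+\<omega>. (\<Sum>k. f k \<omega>) \<partial>M)"
      by (rule nn_integral_add) measurable
    also have "(\<integral>\<^sup>+\<omega>. (\<Sum>k. f k \<omega>) \<partial>M) = (\<Sum>k. \<integral>\<^sup>+\<omega>. f k \<omega> \<partial>M)"
      by (rule nn_integral_suminf) simp
    finally show ?thesis by (simp add: emeasure_space_1)
  qed
  finally have h1: "(\<integral>\<^sup>+\<omega>. ennreal (exp (a * Z \<omega>)) \<partial>M) \<le> ennreal (exp (a * real k0)) + (\<Sum>k. \<integral>\<^sup>+\<omega>. f k \<omega> \<partial>M)" .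
  have sb: "(\<Sum>k. \<integral>\<^sup>+\<omega>. f k \<omega> \<partial>M) \<le> (\<Sum>k. ennreal (exp (a + (a + r) * real k0) * exp (a + r) ^ k))"
  proof (intro suminf_le summableI)
    fix k
    have e1: "(\<integral>\<^sup>+\<omega>. f k \<omega> \<partial>M) = ennreal (exp (a * (real k0 + real k + 1)) * measure M (S k))"
      unfolding f_def by (subst nn_integral_cmult_indicator) (simp_all add: emeasure_eq_measure ennreal_mult)
    have e2: "measure M (S k) \<le> exp (r * (real k0 + real k))"
      unfolding S_def using k0 by (intro x0) simp
    have e3: "exp (a * (real k0 + real k + 1)) * exp (r * (real k0 + real k)) = exp (a + (a + r) * real k0) * exp (a + r) ^ k"
      by (simp add: exp_add[symmetric] exp_of_nat_mult[symmetric] algebra_simps)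
    show "(\<integral>\<^sup>+\<omega>. f k \<omega> \<partial>M) \<le> ennreal (exp (a + (a + r) * real k0) * exp (a + r) ^ k)"
      unfolding e1 e3[symmetric] by (intro ennreal_leI mult_left_mono e2) simp
  qed
  have "(\<integral>\<^sup>+\<omega>. ennreal (exp (a * Z \<omega>)) \<partial>M) \<le> ennreal (exp (a * real k0)) + (\<Sum>k. ennreal (exp (a + (a + r) * real k0) * exp (a + r) ^ k))"
    by (rule order_trans[OF h1 add_left_mono[OF sb]])
  also have "(\<Sum>k. ennreal (exp (a + (a + r) * real k0) * exp (a + r) ^ k)) = ennreal (exp (a + (a + r) * real k0) * (1 / (1 - exp (a + r))))"
  proof (rule suminf_ennreal_eq)
    have q: "norm (exp (a + r)) < 1" using ar by simp
    show "(\<lambda>k. exp (a + (a + r) * real k0) * exp (a + r) ^ k) sums (exp (a + (a + r) * real k0) * (1 / (1 - exp (a + r))))"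
      by (rule sums_mult[OF geometric_sums[OF q]])
  qed simp
  finally have "(\<integral>\<^sup>+\<omega>. ennreal (exp (a * Z \<omega>)) \<partial>M) \<le> ennreal (exp (a * real k0)) + ennreal (exp (a + (a + r) * real k0) * (1 / (1 - exp (a + r))))" .
  then show ?thesis unfolding infinity_ennreal_def by (rule le_less_trans) simp
qed


lemma amgm_exp:
  fixes c d :: real
  shows "exp ((c + d) / 2) \<le> (exp c + exp d) / 2"
    and "c \<noteq> d \<Longrightarrow> exp ((c + d) / 2) < (exp c + exp d) / 2"
proof -
  define p where "p = exp (c / 2)"
  define q where "q = exp (d / 2)"
  have ec: "exp c = p * p" unfolding p_def by (simp flip: exp_add)
  have ed: "exp d = q * q" unfolding q_def by (simp flip: exp_add)
  have em: "exp ((c + d) / 2) = p * q" unfolding p_def q_def by (simp flip: exp_add add: add_divide_distrib)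
  have key: "(exp c + exp d) / 2 - exp ((c + d) / 2) = (p - q)^2 / 2"
    unfolding ec ed em by (simp add: power2_eq_square algebra_simps)
  show "exp ((c + d) / 2) \<le> (exp c + exp d) / 2" using key by (metis diff_ge_0_iff_ge zero_le_power2 half_gt_zero_iff divide_nonneg_pos zero_less_numeral)
  assume "c \<noteq> d"
  then have "p \<noteq> q" unfolding p_def q_def by simp
  then have "0 < (p - q)^2 / 2" by simp
  then show "exp ((c + d) / 2) < (exp c + exp d) / 2" using key by linarith
qed

lemma lap_convex:
  assumes P: "prob_space M" and [measurable]: "X0 \<in> borel_measurable M" "Y0 \<in> borel_measurable M"
    and la: "Lap M X0 Y0 t a \<le> 1" and lb: "Lap M X0 Y0 t b \<le> 1"
    and l: "0 \<le> l" "l \<le> 1"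
  shows "Lap M X0 Y0 t ((1 - l) * a + l * b) \<le> 1"
proof -
  have "Lap M X0 Y0 t ((1 - l) * a + l * b) \<le> (\<integral>\<^sup>+\<omega>. ennreal (1 - l) * ennreal (exp (t * Y0 \<omega> - a * X0 \<omega>)) + ennreal l * ennreal (exp (t * Y0 \<omega> - b * X0 \<omega>)) \<partial>M)"
    unfolding Lap_def
  proof (rule nn_integral_mono)
    fix \<omega>
    have "exp (t * Y0 \<omega> - ((1 - l) * a + l * b) * X0 \<omega>) = exp ((1 - l) * (t * Y0 \<omega> - a * X0 \<omega>) + l * (t * Y0 \<omega> - b * X0 \<omega>))"
      by (simp add: algebra_simps)
    also have "\<dots> \<le> (1 - l) * exp (t * Y0 \<omega> - a * X0 \<omega>) + l * exp (t * Y0 \<omega> - b * X0 \<omega>)"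
      using convex_onD[OF convex_on_exp[of 1], where t=l and x="t * Y0 \<omega> - a * X0 \<omega>" and y="t * Y0 \<omega> - b * X0 \<omega>"] l by simp
    finally show "ennreal (exp (t * Y0 \<omega> - ((1 - l) * a + l * b) * X0 \<omega>)) \<le> ennreal (1 - l) * ennreal (exp (t * Y0 \<omega> - a * X0 \<omega>)) + ennreal l * ennreal (exp (t * Y0 \<omega> - b * X0 \<omega>))"
      using l by (simp add: ennreal_mult[symmetric] ennreal_plus[symmetric] ennreal_leI del: ennreal_mult ennreal_plus)
  qed
  also have "\<dots> = ennreal (1 - l) * Lap M X0 Y0 t a + ennreal l * Lap M X0 Y0 t b"
    unfolding Lap_def by (simp add: nn_integral_add nn_integral_cmult)
  also have "\<dots> \<le> ennreal (1 - l) * 1 + ennreal l * 1"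
    by (intro add_mono mult_left_mono la lb) auto
  also have "\<dots> = 1" using l by (simp flip: ennreal_plus)
  finally show ?thesis .
qed

lemma lap_mid_strict:
  assumes P: "prob_space M" and [measurable]: "X0 \<in> borel_measurable M" "Y0 \<in> borel_measurable M"
    and nd: "\<not> (AE \<omega> in M. X0 \<omega> = 0)"
    and ab: "a \<noteq> b"
    and la: "Lap M X0 Y0 t a \<le> 1" and lb: "Lap M X0 Y0 t b \<le> 1"
  shows "Lap M X0 Y0 t ((a + b) / 2) < 1"
proof -
  define f where "f \<omega> = ennreal (exp (t * Y0 \<omega> - (a + b) / 2 * X0 \<omega>))" for \<omega>
  define g where "g \<omega> = ennreal ((exp (t * Y0 \<omega> - a * X0 \<omega>) + exp (t * Y0 \<omega> - b * X0 \<omega>)) / 2)" for \<omega>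
  have mid: "t * Y0 \<omega> - (a + b) / 2 * X0 \<omega> = ((t * Y0 \<omega> - a * X0 \<omega>) + (t * Y0 \<omega> - b * X0 \<omega>)) / 2" for \<omega>
    by (simp add: field_simps)
  have fg: "f \<omega> \<le> g \<omega>" for \<omega>
    unfolding f_def g_def mid by (intro ennreal_leI amgm_exp(1))
  have fgs: "X0 \<omega> \<noteq> 0 \<Longrightarrow> f \<omega> < g \<omega>" for \<omega>
  proof -
    assume "X0 \<omega> \<noteq> 0"
    then have "t * Y0 \<omega> - a * X0 \<omega> \<noteq> t * Y0 \<omega> - b * X0 \<omega>" using ab by simp
    then have "exp (t * Y0 \<omega> - (a + b) / 2 * X0 \<omega>) < (exp (t * Y0 \<omega> - a * X0 \<omega>) + exp (t * Y0 \<omega> - b * X0 \<omega>)) / 2"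
      unfolding mid by (rule amgm_exp(2))
    then show "f \<omega> < g \<omega>" unfolding f_def g_def by (simp add: ennreal_less_iff)
  qed
  have gint: "(\<integral>\<^sup>+\<omega>. g \<omega> \<partial>M) = ennreal (1/2) * (Lap M X0 Y0 t a + Lap M X0 Y0 t b)"
  proof -
    have "(\<integral>\<^sup>+\<omega>. g \<omega> \<partial>M) = (\<integral>\<^sup>+\<omega>. ennreal (1/2) * (ennreal (exp (t * Y0 \<omega> - a * X0 \<omega>)) + ennreal (exp (t * Y0 \<omega> - b * X0 \<omega>))) \<partial>M)"
      unfolding g_def by (intro nn_integral_cong) (simp add: divide_ennreal[symmetric] ennreal_numeral divide_ennreal_def mult.commute)
    also have "\<dots> = ennreal (1/2) * (Lap M X0 Y0 t a + Lap M X0 Y0 t b)"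
      unfolding Lap_def by (simp add: nn_integral_add nn_integral_cmult)
    finally show ?thesis .
  qed
  have g1: "(\<integral>\<^sup>+\<omega>. g \<omega> \<partial>M) \<le> 1"
  proof -
    have s2: "Lap M X0 Y0 t a + Lap M X0 Y0 t b \<le> ennreal 2"
      using add_mono[OF la lb] by (simp only: one_add_one ennreal_numeral)
    have "ennreal (1/2) * (Lap M X0 Y0 t a + Lap M X0 Y0 t b) \<le> ennreal (1/2) * ennreal 2"
      using s2 by (rule mult_left_mono) simp
    also have "\<dots> = 1" by (subst ennreal_mult[symmetric]) simp_all
    finally show ?thesis unfolding gint .
  qed
  have "(\<integral>\<^sup>+\<omega>. f \<omega> \<partial>M) < (\<integral>\<^sup>+\<omega>. g \<omega> \<partial>M)"
  proof (rule nn_integral_less)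
    show "f \<in> borel_measurable M" unfolding f_def by measurable
    show "g \<in> borel_measurable M" unfolding g_def by measurable
    have "(\<integral>\<^sup>+\<omega>. f \<omega> \<partial>M) \<le> 1" using nn_integral_mono[of M f g] fg g1 by (meson order_trans)
    then show "(\<integral>\<^sup>+\<omega>. f \<omega> \<partial>M) \<noteq> \<infinity>" by (auto simp: top_unique)
    show "AE \<omega> in M. f \<omega> \<le> g \<omega>" using fg by simp
    show "\<not> (AE \<omega> in M. g \<omega> \<le> f \<omega>)"
    proof
      assume "AE \<omega> in M. g \<omega> \<le> f \<omega>"
      then have "AE \<omega> in M. X0 \<omega> = 0"
        by eventually_elim (use fgs in \<open>force simp: not_less[symmetric]\<close>)
      with nd show False by simp
    qed
  qed
  then show ?thesis using g1 unfolding Lap_def f_def by simp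
qed

locale iidsetup = prob_space M for M :: "'a measure" +
  fixes X Y :: "nat \<Rightarrow> 'a \<Rightarrow> real"
  assumes measX[measurable]: "\<And>n. X n \<in> borel_measurable M"
    and measY[measurable]: "\<And>n. Y n \<in> borel_measurable M"
    and indep: "indep_vars (\<lambda>_. borel) (\<lambda>n \<omega>. (X n \<omega>, Y n \<omega>)) UNIV"
    and ident: "\<And>n. distr M borel (\<lambda>\<omega>. (X n \<omega>, Y n \<omega>)) = distr M borel (\<lambda>\<omega>. (X 0 \<omega>, Y 0 \<omega>))"
begin

lemma split_last:
  fixes F :: "(nat \<Rightarrow> real \<times> real) \<Rightarrow> ennreal" and g :: "real \<times> real \<Rightarrow> ennreal"
  assumes F[measurable]: "F \<in> borel_measurable (PiM {..<n} (\<lambda>_. borel))"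
    and g[measurable]: "g \<in> borel_measurable borel"
  shows "(\<integral>\<^sup>+\<omega>. F (\<lambda>i\<in>{..<n}. (X i \<omega>, Y i \<omega>)) * g (X n \<omega>, Y n \<omega>) \<partial>M)
     = (\<integral>\<^sup>+\<omega>. F (\<lambda>i\<in>{..<n}. (X i \<omega>, Y i \<omega>)) \<partial>M) * (\<integral>\<^sup>+\<omega>. g (X 0 \<omega>, Y 0 \<omega>) \<partial>M)"
proof -
  let ?V = "\<lambda>n \<omega>. (X n \<omega>, Y n \<omega>)"
  have iv: "indep_var (PiM {..<n} (\<lambda>_. borel)) (\<lambda>\<omega>. \<lambda>i\<in>{..<n}. ?V i \<omega>)
             (PiM {n} (\<lambda>_. borel)) (\<lambda>\<omega>. \<lambda>i\<in>{n}. ?V i \<omega>)"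
    by (rule indep_var_restrict[OF indep]) auto
  have gm: "(\<lambda>v. g (v n)) \<in> borel_measurable (PiM {n} (\<lambda>_. borel::(real\<times>real) measure))"
    by measurable
  have iv2: "indep_var borel (F \<circ> (\<lambda>\<omega>. \<lambda>i\<in>{..<n}. ?V i \<omega>)) borel ((\<lambda>v. g (v n)) \<circ> (\<lambda>\<omega>. \<lambda>i\<in>{n}. ?V i \<omega>))"
    by (rule indep_var_compose[OF iv F gm])
  define U where "U = case_bool (F \<circ> (\<lambda>\<omega>. \<lambda>i\<in>{..<n}. ?V i \<omega>)) ((\<lambda>v. g (v n)) \<circ> (\<lambda>\<omega>. \<lambda>i\<in>{n}. ?V i \<omega>))"
  have iv3: "indep_vars (\<lambda>_. borel) U UNIV"
  proof -
    have "indep_vars (case_bool borel borel) U UNIV" using iv2 unfolding indep_var_def U_def .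
    moreover have "case_bool borel borel = (\<lambda>_::bool. borel::ennreal measure)"
      by (auto simp: fun_eq_iff split: bool.split)
    ultimately show ?thesis by simp
  qed
  have "(\<integral>\<^sup>+\<omega>. (\<Prod>b\<in>UNIV. U b \<omega>) \<partial>M) = (\<Prod>b\<in>UNIV. integral\<^sup>N M (U b))"
    by (rule indep_vars_nn_integral[OF _ iv3]) auto
  then have eq: "(\<integral>\<^sup>+\<omega>. F (\<lambda>i\<in>{..<n}. ?V i \<omega>) * g (?V n \<omega>) \<partial>M)
     = (\<integral>\<^sup>+\<omega>. F (\<lambda>i\<in>{..<n}. ?V i \<omega>) \<partial>M) * (\<integral>\<^sup>+\<omega>. g (?V n \<omega>) \<partial>M)"
    by (simp add: UNIV_bool U_def comp_def) (simp only: mult.commute)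
  have "(\<integral>\<^sup>+\<omega>. g (?V n \<omega>) \<partial>M) = (\<integral>\<^sup>+z. g z \<partial>distr M borel (?V n))"
    by (rule nn_integral_distr[symmetric]) simp_all
  also have "\<dots> = (\<integral>\<^sup>+z. g z \<partial>distr M borel (?V 0))" by (rule arg_cong[where f="\<lambda>N. integral\<^sup>N N g"], rule ident)
  also have "\<dots> = (\<integral>\<^sup>+\<omega>. g (?V 0 \<omega>) \<partial>M)"
    by (rule nn_integral_distr) simp_all
  finally show ?thesis using eq by simp
qed

lemma prod_int:
  fixes g :: "real \<times> real \<Rightarrow> ennreal"
  assumes g[measurable]: "g \<in> borel_measurable borel"
  shows "(\<integral>\<^sup>+\<omega>. (\<Prod>i<n. g (X i \<omega>, Y i \<omega>)) \<partial>M) = (\<integral>\<^sup>+\<omega>. g (X 0 \<omega>, Y 0 \<omega>) \<partial>M) ^ n"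
proof (induction n)
  case 0
  then show ?case by (simp add: emeasure_space_1)
next
  case (Suc n)
  have F: "(\<lambda>v. \<Prod>i<n. g (v i)) \<in> borel_measurable (PiM {..<n} (\<lambda>_. borel::(real\<times>real) measure))"
    by measurable
  have "(\<integral>\<^sup>+\<omega>. (\<Prod>i<Suc n. g (X i \<omega>, Y i \<omega>)) \<partial>M)
      = (\<integral>\<^sup>+\<omega>. (\<lambda>v. \<Prod>i<n. g (v i)) (\<lambda>i\<in>{..<n}. (X i \<omega>, Y i \<omega>)) * g (X n \<omega>, Y n \<omega>) \<partial>M)"
    by (simp add: prod.lessThan_Suc)
  also have "\<dots> = (\<integral>\<^sup>+\<omega>. (\<lambda>v. \<Prod>i<n. g (v i)) (\<lambda>i\<in>{..<n}. (X i \<omega>, Y i \<omega>)) \<partial>M) * (\<integral>\<^sup>+\<omega>. g (X 0 \<omega>, Y 0 \<omega>) \<partial>M)"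
    by (rule split_last[OF F g])
  also have "\<dots> = (\<integral>\<^sup>+\<omega>. g (X 0 \<omega>, Y 0 \<omega>) \<partial>M) ^ Suc n"
    using Suc by (simp add: mult.commute)
  finally show ?case .
qed

definition Stay :: "real \<Rightarrow> nat \<Rightarrow> 'a set" where
  "Stay x n = {\<omega>\<in>space M. \<forall>k\<in>{1..n}. (\<Sum>i<k. X i \<omega>) \<le> x}"
definition Ev :: "real \<Rightarrow> nat \<Rightarrow> 'a set" where
  "Ev x n = {\<omega>\<in>space M. (\<forall>k\<in>{1..n}. (\<Sum>i<k. X i \<omega>) \<le> x) \<and> x < (\<Sum>i<Suc n. X i \<omega>)}"

lemma Stay_sets[measurable]: "Stay x n \<in> sets M"
  unfolding Stay_def by measurable
lemma Ev_sets[measurable]: "Ev x n \<in> sets M"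
  unfolding Ev_def by measurable

lemma Ev_Nfun:
  assumes "\<omega> \<in> Ev x n" shows "Nfun X x \<omega> = n"
  unfolding Nfun_def
proof (rule Greatest_equality)
  show "\<forall>k\<in>{1..n}. (\<Sum>i<k. X i \<omega>) \<le> x" using assms by (auto simp: Ev_def)
  fix m assume m: "\<forall>k\<in>{1..m}. (\<Sum>i<k. X i \<omega>) \<le> x"
  show "m \<le> n"
  proof (rule ccontr)
    assume "\<not> m \<le> n"
    then have "Suc n \<in> {1..m}" by auto
    with m have "(\<Sum>i<Suc n. X i \<omega>) \<le> x" by blast
    with assms show False by (auto simp: Ev_def)
  qed
qed

lemma Ev_exists:
  assumes "\<omega> \<in> space M" "\<exists>k\<ge>1. x < (\<Sum>i<k. X i \<omega>)"
  shows "\<exists>n. \<omega> \<in> Ev x n"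
proof -
  define k0 where "k0 = (LEAST k. k \<ge> 1 \<and> x < (\<Sum>i<k. X i \<omega>))"
  have k0: "k0 \<ge> 1 \<and> x < (\<Sum>i<k0. X i \<omega>)"
    unfolding k0_def using assms(2) by (rule LeastI_ex)
  have below: "\<And>k. k \<in> {1..k0 - 1} \<Longrightarrow> (\<Sum>i<k. X i \<omega>) \<le> x"
  proof -
    fix k assume k: "k \<in> {1..k0 - 1}"
    show "(\<Sum>i<k. X i \<omega>) \<le> x"
    proof (rule ccontr)
      assume "\<not> (\<Sum>i<k. X i \<omega>) \<le> x"
      then have "k0 \<le> k" unfolding k0_def using k by (intro Least_le) auto
      with k k0 show False by auto
    qed
  qed
  have "Suc (k0 - 1) = k0" using k0 by auto
  then have "\<omega> \<in> Ev x (k0 - 1)" using below k0 assms(1) unfolding Ev_def by auto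
  then show ?thesis by blast
qed

lemma Ev_unique: "\<omega> \<in> Ev x n \<Longrightarrow> \<omega> \<in> Ev x m \<Longrightarrow> n = m"
  using Ev_Nfun by metis

lemma Mgf_decomp:
  assumes drift: "AE \<omega> in M. (SUP n\<in>{1..}. ereal (\<Sum>i<n. X i \<omega>)) = \<infinity>"
  shows "Mgf M X Y x t = (\<Sum>n. \<integral>\<^sup>+\<omega>. ennreal (exp (t * (\<Sum>i<n. Y i \<omega>))) * indicator (Ev x n) \<omega> \<partial>M)"
proof -
  have "AE \<omega> in M. ennreal (exp (t * Wfun X Y x \<omega>)) =
     (\<Sum>n. ennreal (exp (t * (\<Sum>i<n. Y i \<omega>))) * indicator (Ev x n) \<omega>)"
    using drift AE_space
  proof eventually_elim
    case (elim \<omega>)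
    show ?case
    proof -
      have True: "\<omega> \<in> space M" using elim by simp
      have "ereal x < (SUP n\<in>{1..}. ereal (\<Sum>i<n. X i \<omega>))" using elim by simp
      then obtain k where "k \<in> {1..}" "ereal x < ereal (\<Sum>i<k. X i \<omega>)"
        by (auto simp: less_SUP_iff)
      then have "\<exists>k\<ge>1. x < (\<Sum>i<k. X i \<omega>)" by auto
      then obtain n where n: "\<omega> \<in> Ev x n" using Ev_exists True by blast
      have "(\<Sum>m. ennreal (exp (t * (\<Sum>i<m. Y i \<omega>))) * indicator (Ev x m) \<omega>)
          = (\<Sum>m\<in>{n}. ennreal (exp (t * (\<Sum>i<m. Y i \<omega>))) * indicator (Ev x m) \<omega>)"
        by (rule suminf_finite) (use n Ev_unique in \<open>auto simp: indicator_def\<close>)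
      also have "\<dots> = ennreal (exp (t * Wfun X Y x \<omega>))"
        using n Ev_Nfun[OF n] by (simp add: Wfun_def)
      finally show ?thesis by simp
    qed
  qed
  then have "Mgf M X Y x t = (\<integral>\<^sup>+\<omega>. (\<Sum>n. ennreal (exp (t * (\<Sum>i<n. Y i \<omega>))) * indicator (Ev x n) \<omega>) \<partial>M)"
    unfolding Mgf_def by (rule nn_integral_cong_AE)
  also have "\<dots> = (\<Sum>n. \<integral>\<^sup>+\<omega>. ennreal (exp (t * (\<Sum>i<n. Y i \<omega>))) * indicator (Ev x n) \<omega> \<partial>M)"
    by (rule nn_integral_suminf) measurable
  finally show ?thesis .
qed


lemma Vmeas[measurable]: "(\<lambda>\<omega>. (X i \<omega>, Y i \<omega>)) \<in> borel_measurable M"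
  by (subst borel_prod[symmetric]) measurable

lemma Fmeas:
  fixes F :: "(nat \<Rightarrow> real \<times> real) \<Rightarrow> ennreal" and g :: "real \<times> real \<Rightarrow> ennreal"
  assumes F: "F \<in> borel_measurable (PiM {..<n} (\<lambda>_. borel))"
    and g: "g \<in> borel_measurable borel"
  shows "(\<lambda>\<omega>. F (\<lambda>i\<in>{..<n}. (X i \<omega>, Y i \<omega>))) \<in> borel_measurable M"
    and "(\<lambda>\<omega>. F (\<lambda>i\<in>{..<n}. (X i \<omega>, Y i \<omega>)) * g (X m \<omega>, Y m \<omega>)) \<in> borel_measurable M"
proof -
  have R: "(\<lambda>\<omega>. \<lambda>i\<in>{..<n}. (X i \<omega>, Y i \<omega>)) \<in> M \<rightarrow>\<^sub>M PiM {..<n} (\<lambda>_. borel)"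
    by (rule measurable_restrict) simp
  show 1: "(\<lambda>\<omega>. F (\<lambda>i\<in>{..<n}. (X i \<omega>, Y i \<omega>))) \<in> borel_measurable M"
    by (rule measurable_compose[OF R F])
  have 2: "(\<lambda>\<omega>. g (X m \<omega>, Y m \<omega>)) \<in> borel_measurable M"
    by (rule measurable_compose[OF Vmeas g])
  show "(\<lambda>\<omega>. F (\<lambda>i\<in>{..<n}. (X i \<omega>, Y i \<omega>)) * g (X m \<omega>, Y m \<omega>)) \<in> borel_measurable M"
    using 1 2 by measurable
qed

lemma Pmeas:
  fixes g :: "real \<times> real \<Rightarrow> ennreal"
  assumes g: "g \<in> borel_measurable borel"
  shows "(\<lambda>\<omega>. \<Prod>i<n. g (X i \<omega>, Y i \<omega>)) \<in> borel_measurable M"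
proof -
  have "\<And>i. (\<lambda>\<omega>. g (X i \<omega>, Y i \<omega>)) \<in> borel_measurable M"
    by (rule measurable_compose[OF Vmeas g])
  then show ?thesis by measurable
qed

lemma Ev_le: assumes "\<omega> \<in> Ev x n" "0 \<le> x" shows "(\<Sum>i<n. X i \<omega>) \<le> x"
proof (cases "n = 0")
  case False
  then have "n \<in> {1..n}" by auto
  with assms show ?thesis by (auto simp: Ev_def)
qed (use assms in simp)

lemma prod_meas:
  fixes g :: "real \<times> real \<Rightarrow> ennreal"
  assumes g[measurable]: "g \<in> borel_measurable borel"
  shows "(\<lambda>v. \<Prod>i<n. g (v i)) \<in> borel_measurable (PiM {..<n} (\<lambda>_. borel::(real\<times>real) measure))"
  by measurable

lemma Ev_gt: "\<omega> \<in> Ev x n \<Longrightarrow> x < (\<Sum>i<n. X i \<omega>) + X n \<omega>"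
  by (auto simp: Ev_def)

lemma exp_T_split:
  "exp (t * (\<Sum>i<n. Y i \<omega>)) = exp (\<Sum>i<n. t * Y i \<omega> - s * X i \<omega>) * exp (s * (\<Sum>i<n. X i \<omega>))"
  by (simp add: sum_subtractf sum_distrib_left flip: exp_add)

lemma prod_exp_ennreal:
  "(\<Prod>i<(n::nat). ennreal (exp (f i))) = ennreal (exp (\<Sum>i<n. f i))"
  by (induction n) (simp_all add: exp_add ennreal_mult)

lemma gmeas[measurable]: "(\<lambda>z::real\<times>real. ennreal (exp (a * snd z - b * fst z))) \<in> borel_measurable borel"
  by (subst borel_prod[symmetric]) measurable
lemma gmeas2[measurable]: "(\<lambda>z::real\<times>real. ennreal (exp (b * fst z))) \<in> borel_measurable borel"
  by (subst borel_prod[symmetric]) measurable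

lemma upper_term_pos:
  assumes "0 \<le> s" "0 \<le> x"
  shows "(\<integral>\<^sup>+\<omega>. ennreal (exp (t * (\<Sum>i<n. Y i \<omega>))) * indicator (Ev x n) \<omega> \<partial>M)
     \<le> ennreal (exp (s * x)) * Lap M (X 0) (Y 0) t s ^ n"
proof -
  let ?g = "\<lambda>z::real\<times>real. ennreal (exp (t * snd z - s * fst z))"
  have "(\<integral>\<^sup>+\<omega>. ennreal (exp (t * (\<Sum>i<n. Y i \<omega>))) * indicator (Ev x n) \<omega> \<partial>M)
      \<le> (\<integral>\<^sup>+\<omega>. ennreal (exp (s * x)) * (\<Prod>i<n. ?g (X i \<omega>, Y i \<omega>)) \<partial>M)"
  proof (rule nn_integral_mono)
    fix \<omega> assume "\<omega> \<in> space M"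
    show "ennreal (exp (t * (\<Sum>i<n. Y i \<omega>))) * indicator (Ev x n) \<omega>
        \<le> ennreal (exp (s * x)) * (\<Prod>i<n. ?g (X i \<omega>, Y i \<omega>))"
    proof (cases "\<omega> \<in> Ev x n")
      case True
      have "s * (\<Sum>i<n. X i \<omega>) \<le> s * x" using Ev_le[OF True assms(2)] assms(1) by (simp add: mult_left_mono)
      then have "exp (t * (\<Sum>i<n. Y i \<omega>)) \<le> exp (s * x) * exp (\<Sum>i<n. t * Y i \<omega> - s * X i \<omega>)"
        unfolding exp_T_split[where s=s] by (simp add: mult.commute)
      then show ?thesis using True
        by (simp add: prod_exp_ennreal ennreal_mult[symmetric] ennreal_leI del: ennreal_mult)
    qed simp
  qed
  also have "\<dots> = ennreal (exp (s * x)) * (\<integral>\<^sup>+\<omega>. (\<Prod>i<n. ?g (X i \<omega>, Y i \<omega>)) \<partial>M)"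
    by (rule nn_integral_cmult) (rule Pmeas[OF gmeas])
  also have "\<dots> = ennreal (exp (s * x)) * Lap M (X 0) (Y 0) t s ^ n"
    by (subst prod_int[OF gmeas]) (simp add: Lap_def)
  finally show ?thesis .
qed

lemma upper_term_neg:
  assumes "s < 0"
  shows "(\<integral>\<^sup>+\<omega>. ennreal (exp (t * (\<Sum>i<n. Y i \<omega>))) * indicator (Ev x n) \<omega> \<partial>M)
     \<le> ennreal (exp (s * x)) * (Lap M (X 0) (Y 0) t s ^ n * (\<integral>\<^sup>+\<omega>. ennreal (exp (- s * X 0 \<omega>)) \<partial>M))"
proof -
  let ?g = "\<lambda>z::real\<times>real. ennreal (exp (t * snd z - s * fst z))"
  let ?g2 = "\<lambda>z::real\<times>real. ennreal (exp (- s * fst z))"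
  let ?F = "\<lambda>v::nat\<Rightarrow>real\<times>real. \<Prod>i<n. ?g (v i)"
  have Fm: "?F \<in> borel_measurable (PiM {..<n} (\<lambda>_. borel))" by (rule prod_meas) (rule gmeas)
  have "(\<integral>\<^sup>+\<omega>. ennreal (exp (t * (\<Sum>i<n. Y i \<omega>))) * indicator (Ev x n) \<omega> \<partial>M)
      \<le> (\<integral>\<^sup>+\<omega>. ennreal (exp (s * x)) * (?F (\<lambda>i\<in>{..<n}. (X i \<omega>, Y i \<omega>)) * ?g2 (X n \<omega>, Y n \<omega>)) \<partial>M)"
  proof (rule nn_integral_mono)
    fix \<omega> assume "\<omega> \<in> space M"
    show "ennreal (exp (t * (\<Sum>i<n. Y i \<omega>))) * indicator (Ev x n) \<omega>
        \<le> ennreal (exp (s * x)) * (?F (\<lambda>i\<in>{..<n}. (X i \<omega>, Y i \<omega>)) * ?g2 (X n \<omega>, Y n \<omega>))"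
    proof (cases "\<omega> \<in> Ev x n")
      case True
      have "s * ((\<Sum>i<n. X i \<omega>) + X n \<omega>) \<le> s * x" using Ev_gt[OF True] assms by simp
      then have "s * (\<Sum>i<n. X i \<omega>) \<le> s * x + (- s * X n \<omega>)" by (simp add: algebra_simps)
      then have "exp (t * (\<Sum>i<n. Y i \<omega>)) \<le> exp (s * x) * (exp (\<Sum>i<n. t * Y i \<omega> - s * X i \<omega>) * exp (- s * X n \<omega>))"
        unfolding exp_T_split[where s=s] by (simp add: mult_ac flip: exp_add)
      moreover have "?F (\<lambda>i\<in>{..<n}. (X i \<omega>, Y i \<omega>)) = ennreal (exp (\<Sum>i<n. t * Y i \<omega> - s * X i \<omega>))"
        by (simp add: prod_exp_ennreal[symmetric])
      ultimately show ?thesis using True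
        by (simp add: ennreal_mult[symmetric] ennreal_leI del: ennreal_mult)
    qed simp
  qed
  also have "\<dots> = ennreal (exp (s * x)) * (\<integral>\<^sup>+\<omega>. ?F (\<lambda>i\<in>{..<n}. (X i \<omega>, Y i \<omega>)) * ?g2 (X n \<omega>, Y n \<omega>) \<partial>M)"
    by (rule nn_integral_cmult) (rule Fmeas(2)[OF Fm gmeas2])
  also have "\<dots> = ennreal (exp (s * x)) * ((\<integral>\<^sup>+\<omega>. ?F (\<lambda>i\<in>{..<n}. (X i \<omega>, Y i \<omega>)) \<partial>M) * (\<integral>\<^sup>+\<omega>. ?g2 (X 0 \<omega>, Y 0 \<omega>) \<partial>M))"
    by (subst split_last[OF Fm gmeas2]) simp
  also have "(\<integral>\<^sup>+\<omega>. ?F (\<lambda>i\<in>{..<n}. (X i \<omega>, Y i \<omega>)) \<partial>M) = (\<integral>\<^sup>+\<omega>. (\<Prod>i<n. ?g (X i \<omega>, Y i \<omega>)) \<partial>M)"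
    by (intro nn_integral_cong) simp
  also have "\<dots> = Lap M (X 0) (Y 0) t s ^ n"
    by (subst prod_int[OF gmeas]) (simp add: Lap_def)
  finally show ?thesis by simp
qed


lemma upper_bound:
  assumes drift: "AE \<omega> in M. (SUP n\<in>{1..}. ereal (\<Sum>i<n. X i \<omega>)) = \<infinity>"
    and L: "Lap M (X 0) (Y 0) t s < 1"
    and tail: "0 \<le> s \<or> (\<integral>\<^sup>+\<omega>. ennreal (exp (- s * X 0 \<omega>)) \<partial>M) < \<infinity>"
  shows "\<exists>C\<ge>0. \<forall>x\<ge>0. Mgf M X Y x t \<le> ennreal (C * exp (s * x))"
proof -
  define c where "c = (if 0 \<le> s then 1 else (\<integral>\<^sup>+\<omega>. ennreal (exp (- s * X 0 \<omega>)) \<partial>M))"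
  have "c < \<infinity>" using tail by (auto simp: c_def)
  then obtain c' where c': "c = ennreal c'" "0 \<le> c'" by (cases c) auto
  obtain q where q: "Lap M (X 0) (Y 0) t s = ennreal q" "0 \<le> q"
    using L by (cases "Lap M (X 0) (Y 0) t s") auto
  have q1: "q < 1" using L q by (simp add: ennreal_less_iff)
  have "\<forall>x\<ge>0. Mgf M X Y x t \<le> ennreal (c' / (1 - q) * exp (s * x))"
  proof (intro allI impI)
    fix x :: real assume x: "0 \<le> x"
    have trm: "(\<integral>\<^sup>+\<omega>. ennreal (exp (t * (\<Sum>i<n. Y i \<omega>))) * indicator (Ev x n) \<omega> \<partial>M)
        \<le> ennreal (exp (s * x) * q ^ n * c')" for n
    proof (cases "0 \<le> s")
      case True
      have "(\<integral>\<^sup>+\<omega>. ennreal (exp (t * (\<Sum>i<n. Y i \<omega>))) * indicator (Ev x n) \<omega> \<partial>M)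
          \<le> ennreal (exp (s * x)) * Lap M (X 0) (Y 0) t s ^ n" by (rule upper_term_pos[OF True x])
      also have "\<dots> = ennreal (exp (s * x) * q ^ n * c')"
        using True c' q by (simp add: c_def ennreal_mult ennreal_power)
      finally show ?thesis .
    next
      case False
      have "(\<integral>\<^sup>+\<omega>. ennreal (exp (t * (\<Sum>i<n. Y i \<omega>))) * indicator (Ev x n) \<omega> \<partial>M)
          \<le> ennreal (exp (s * x)) * (Lap M (X 0) (Y 0) t s ^ n * (\<integral>\<^sup>+\<omega>. ennreal (exp (- s * X 0 \<omega>)) \<partial>M))"
        using False by (intro upper_term_neg) simp
      also have "\<dots> = ennreal (exp (s * x) * q ^ n * c')"
        using False c' q by (simp add: c_def ennreal_mult ennreal_power mult.assoc)
      finally show ?thesis .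
    qed
    have sums: "(\<lambda>n. exp (s * x) * q ^ n * c') sums (exp (s * x) * (1 / (1 - q)) * c')"
      by (intro sums_mult2 sums_mult geometric_sums) (use q q1 in auto)
    have "Mgf M X Y x t = (\<Sum>n. \<integral>\<^sup>+\<omega>. ennreal (exp (t * (\<Sum>i<n. Y i \<omega>))) * indicator (Ev x n) \<omega> \<partial>M)"
      by (rule Mgf_decomp[OF drift])
    also have "\<dots> \<le> (\<Sum>n. ennreal (exp (s * x) * q ^ n * c'))"
      by (intro suminf_le trm summableI)
    also have "\<dots> = ennreal (exp (s * x) * (1 / (1 - q)) * c')"
      by (rule suminf_ennreal_eq[OF _ sums]) (use q c' in auto)
    also have "\<dots> = ennreal (c' / (1 - q) * exp (s * x))" by (simp add: field_simps)
    finally show "Mgf M X Y x t \<le> ennreal (c' / (1 - q) * exp (s * x))" .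
  qed
  moreover have "0 \<le> c' / (1 - q)" using c' q1 by simp
  ultimately show ?thesis by blast
qed


lemma lin_bound:
  fixes a b K s t :: real
  assumes a: "\<bar>a\<bar> \<le> K" and b: "\<bar>b\<bar> \<le> K"
  shows "t * b - s * a \<le> (\<bar>t\<bar> + \<bar>s\<bar>) * K"
proof -
  have "t * b \<le> \<bar>t\<bar> * K"
    using mult_left_mono[OF b, of "\<bar>t\<bar>"] abs_ge_self[of "t * b"] by (simp add: abs_mult)
  moreover have "- (s * a) \<le> \<bar>s\<bar> * K"
    using mult_left_mono[OF a, of "\<bar>s\<bar>"] abs_ge_self[of "- (s * a)"] by (simp add: abs_mult)
  ultimately show ?thesis by (simp add: algebra_simps)
qed

lemma gK_le:
  assumes "0 \<le> K"
  shows "gK t s K z \<le> ennreal (exp ((\<bar>t\<bar> + \<bar>s\<bar>) * K))"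
proof (cases "z \<in> BK K")
  case True
  then have a: "\<bar>fst z\<bar> \<le> K" and b: "\<bar>snd z\<bar> \<le> K" by (auto simp: BK_def)
  have "t * snd z \<le> \<bar>t\<bar> * K"
    using mult_left_mono[OF b, of "\<bar>t\<bar>"] abs_ge_self[of "t * snd z"] by (simp add: abs_mult)
  moreover have "- (s * fst z) \<le> \<bar>s\<bar> * K"
    using mult_left_mono[OF a, of "\<bar>s\<bar>"] abs_ge_self[of "- (s * fst z)"] by (simp add: abs_mult)
  ultimately have "t * snd z - s * fst z \<le> (\<bar>t\<bar> + \<bar>s\<bar>) * K" by (simp add: algebra_simps)
  then show ?thesis using True by (simp add: gK_def ennreal_leI)
qed (simp add: gK_def)

lemma exists_K:
  assumes "1 < Lap M (X 0) (Y 0) t s"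
  shows "\<exists>K::nat. 1 < (\<integral>\<^sup>+\<omega>. gK t s (real K) (X 0 \<omega>, Y 0 \<omega>) \<partial>M)"
proof -
  let ?f = "\<lambda>(K::nat) \<omega>. gK t s (real K) (X 0 \<omega>, Y 0 \<omega>)"
  have inc: "incseq ?f"
  proof (rule incseq_SucI, rule le_funI)
    fix K \<omega>
    have "BK (real K) \<subseteq> BK (real (Suc K))" by (auto simp: BK_def)
    then show "?f K \<omega> \<le> ?f (Suc K) \<omega>"
      by (auto simp: gK_def indicator_def)
  qed
  have sup: "(SUP K. ?f K \<omega>) = ennreal (exp (t * Y 0 \<omega> - s * X 0 \<omega>))" for \<omega>
  proof (rule antisym)
    show "(SUP K. ?f K \<omega>) \<le> ennreal (exp (t * Y 0 \<omega> - s * X 0 \<omega>))"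
      by (rule SUP_least) (auto simp: gK_def indicator_def)
    define K0 where "K0 = nat \<lceil>max \<bar>X 0 \<omega>\<bar> \<bar>Y 0 \<omega>\<bar>\<rceil>"
    have "max \<bar>X 0 \<omega>\<bar> \<bar>Y 0 \<omega>\<bar> \<le> real K0" unfolding K0_def by linarith
    then have "(X 0 \<omega>, Y 0 \<omega>) \<in> BK (real K0)" by (auto simp: BK_def)
    then have "?f K0 \<omega> = ennreal (exp (t * Y 0 \<omega> - s * X 0 \<omega>))" by (simp add: gK_def)
    then show "ennreal (exp (t * Y 0 \<omega> - s * X 0 \<omega>)) \<le> (SUP K. ?f K \<omega>)"
      by (metis SUP_upper UNIV_I)
  qed
  have "Lap M (X 0) (Y 0) t s = (\<integral>\<^sup>+\<omega>. (SUP K. ?f K \<omega>) \<partial>M)"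
    unfolding Lap_def sup ..
  also have "\<dots> = (SUP K. \<integral>\<^sup>+\<omega>. ?f K \<omega> \<partial>M)"
    by (rule nn_integral_monotone_convergence_SUP[OF inc]) (rule measurable_compose[OF Vmeas gK_meas])
  finally show ?thesis using assms by (auto simp: less_SUP_iff)
qed

lemma restrict_sum: "k \<le> n \<Longrightarrow> (\<Sum>i<k. fst ((\<lambda>i\<in>{..<n}. (X i \<omega>, Y i \<omega>)) i)) = (\<Sum>i<k. X i \<omega>)"
  by (intro sum.cong) auto

lemma Stay_0: "Stay x 0 = space M" by (auto simp: Stay_def)

lemma Stay_Suc: "\<omega> \<in> space M \<Longrightarrow>
   indicator (Stay x n) \<omega> = (indicator (Ev x n) \<omega> + indicator (Stay x (Suc n)) \<omega> :: ennreal)"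
proof -
  assume sp: "\<omega> \<in> space M"
  have e: "{1..Suc n} = insert (Suc n) {1..n}" by auto
  have "\<omega> \<in> Stay x (Suc n) \<longleftrightarrow> \<omega> \<in> Stay x n \<and> (\<Sum>i<Suc n. X i \<omega>) \<le> x"
    using sp unfolding Stay_def e by auto
  moreover have "\<omega> \<in> Ev x n \<longleftrightarrow> \<omega> \<in> Stay x n \<and> x < (\<Sum>i<Suc n. X i \<omega>)"
    using sp unfolding Stay_def Ev_def by auto
  ultimately show ?thesis by (auto simp: indicator_def)
qed


lemma lower_bound:
  assumes drift: "AE \<omega> in M. (SUP n\<in>{1..}. ereal (\<Sum>i<n. X i \<omega>)) = \<infinity>"
    and L1: "1 < Lap M (X 0) (Y 0) t s"
    and Lh: "Lap M (X 0) (Y 0) t h \<le> 1"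
    and sh: "s < h"
  shows "\<exists>c>0. \<forall>x\<ge>0. ennreal (c * exp (s * x)) \<le> Mgf M X Y x t"
proof -
  obtain Kn :: nat where Kn: "1 < (\<integral>\<^sup>+\<omega>. gK t s (real Kn) (X 0 \<omega>, Y 0 \<omega>) \<partial>M)"
    using exists_K[OF L1] by blast
  define K where "K = real Kn"
  have K0: "0 \<le> K" by (simp add: K_def)
  define g where "g = gK t s K"
  have gm[measurable]: "g \<in> borel_measurable borel" unfolding g_def by (rule gK_meas)
  define \<phi> where "\<phi> = (\<integral>\<^sup>+\<omega>. g (X 0 \<omega>, Y 0 \<omega>) \<partial>M)"
  have \<phi>1: "1 < \<phi>" using Kn by (simp add: \<phi>_def g_def K_def)
  have "\<phi> \<le> (\<integral>\<^sup>+\<omega>. ennreal (exp ((\<bar>t\<bar> + \<bar>s\<bar>) * K)) \<partial>M)"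
    unfolding \<phi>_def g_def by (intro nn_integral_mono gK_le K0)
  also have "\<dots> = ennreal (exp ((\<bar>t\<bar> + \<bar>s\<bar>) * K))" by (simp add: emeasure_space_1)
  finally have "\<phi> < \<infinity>" by (rule le_less_trans) simp
  then obtain L where L: "\<phi> = ennreal L" "0 \<le> L" by (cases \<phi>) auto
  have L1': "1 < L" using \<phi>1 L(1) by (metis ennreal_le_1 not_le)
  define \<kappa> where "\<kappa> = exp (- (\<bar>s\<bar> * K + (\<bar>t\<bar> + \<bar>s\<bar>) * K))"
  have \<kappa>0: "0 < \<kappa>" by (simp add: \<kappa>_def)
  have "\<forall>x\<ge>0. ennreal (\<kappa> / 2 * exp (s * x)) \<le> Mgf M X Y x t"
  proof (intro allI impI)
    fix x :: real assume x0: "0 \<le> x"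
    define G where "G n \<omega> = (\<Prod>i<n. g (X i \<omega>, Y i \<omega>))" for n \<omega>
    have Gm[measurable]: "G n \<in> borel_measurable M" for n
      unfolding G_def by (rule Pmeas[OF gm])
    define A where "A n = (\<integral>\<^sup>+\<omega>. G n \<omega> * indicator (Stay x n) \<omega> \<partial>M)" for n
    define E where "E n = (\<integral>\<^sup>+\<omega>. G (Suc n) \<omega> * indicator (Ev x n) \<omega> \<partial>M)" for n
    have split: "(\<integral>\<^sup>+\<omega>. G (Suc n) \<omega> * indicator (Stay x n) \<omega> \<partial>M) = A n * \<phi>" for n
    proof -
      define F where "F v = (\<Prod>i<n. g (v i)) * indicator {v. \<forall>k\<in>{1..n}. (\<Sum>i<k. fst (v i)) \<le> x} v" for v :: "nat \<Rightarrow> real \<times> real"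
      have Fm: "F \<in> borel_measurable (PiM {..<n} (\<lambda>_. borel))"
      proof -
        have "(\<lambda>v. \<Prod>i<n. g (v i)) \<in> borel_measurable (PiM {..<n} (\<lambda>_. borel::(real\<times>real) measure))"
          by (rule prod_meas[OF gm])
        moreover have "(\<lambda>v::nat\<Rightarrow>real\<times>real. indicator {v. \<forall>k\<in>{1..n}. (\<Sum>i<k. fst (v i)) \<le> x} v :: ennreal) \<in> borel_measurable (PiM {..<n} (\<lambda>_. borel))"
          by measurable
        ultimately show ?thesis unfolding F_def by measurable
      qed
      have eqF: "F (\<lambda>i\<in>{..<n}. (X i \<omega>, Y i \<omega>)) = G n \<omega> * indicator (Stay x n) \<omega>" if "\<omega> \<in> space M" for \<omega>
      proof -
        have rs: "\<And>k. k \<in> {1..n} \<Longrightarrow> (\<Sum>i<k. fst ((\<lambda>i\<in>{..<n}. (X i \<omega>, Y i \<omega>)) i)) = (\<Sum>i<k. X i \<omega>)"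
          by (rule restrict_sum) simp
        have "(\<forall>k\<in>{1..n}. (\<Sum>i<k. fst ((\<lambda>i\<in>{..<n}. (X i \<omega>, Y i \<omega>)) i)) \<le> x) \<longleftrightarrow> \<omega> \<in> Stay x n"
          using that rs by (simp add: Stay_def)
        then show ?thesis by (simp add: F_def G_def indicator_def)
      qed
      have "(\<integral>\<^sup>+\<omega>. G (Suc n) \<omega> * indicator (Stay x n) \<omega> \<partial>M)
          = (\<integral>\<^sup>+\<omega>. F (\<lambda>i\<in>{..<n}. (X i \<omega>, Y i \<omega>)) * g (X n \<omega>, Y n \<omega>) \<partial>M)"
        by (intro nn_integral_cong) (simp add: eqF G_def prod.lessThan_Suc mult_ac)
      also have "\<dots> = (\<integral>\<^sup>+\<omega>. F (\<lambda>i\<in>{..<n}. (X i \<omega>, Y i \<omega>)) \<partial>M) * \<phi>"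
        unfolding \<phi>_def by (rule split_last[OF Fm gm])
      also have "(\<integral>\<^sup>+\<omega>. F (\<lambda>i\<in>{..<n}. (X i \<omega>, Y i \<omega>)) \<partial>M) = A n"
        unfolding A_def by (intro nn_integral_cong) (simp add: eqF)
      finally show ?thesis .
    qed
    have rec: "E n + A (Suc n) = A n * \<phi>" for n
    proof -
      have "A n * \<phi> = (\<integral>\<^sup>+\<omega>. G (Suc n) \<omega> * indicator (Ev x n) \<omega> + G (Suc n) \<omega> * indicator (Stay x (Suc n)) \<omega> \<partial>M)"
        unfolding split[symmetric] by (intro nn_integral_cong) (subst Stay_Suc, simp_all add: distrib_left)
      also have "\<dots> = E n + A (Suc n)"
        unfolding E_def A_def by (rule nn_integral_add) measurable
      finally show ?thesis by simp
    qed
    have A_le: "A n \<le> \<phi> ^ n" for n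
    proof -
      have "A n \<le> (\<integral>\<^sup>+\<omega>. G n \<omega> \<partial>M)"
        unfolding A_def by (intro nn_integral_mono) (simp add: indicator_def)
      also have "\<dots> = \<phi> ^ n" unfolding G_def \<phi>_def by (rule prod_int[OF gm])
      finally show ?thesis .
    qed
    have A0: "A 0 = 1" by (simp add: A_def G_def Stay_0 emeasure_space_1)
    have A_exp: "A m \<le> ennreal (exp ((h - s) * x))" for m
    proof -
      let ?g' = "\<lambda>z::real\<times>real. ennreal (exp (t * snd z - h * fst z))"
      have "A m \<le> (\<integral>\<^sup>+\<omega>. ennreal (exp ((h - s) * x)) * (\<Prod>i<m. ?g' (X i \<omega>, Y i \<omega>)) \<partial>M)"
        unfolding A_def
      proof (rule nn_integral_mono)
        fix \<omega> assume sp: "\<omega> \<in> space M"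
        show "G m \<omega> * indicator (Stay x m) \<omega> \<le> ennreal (exp ((h - s) * x)) * (\<Prod>i<m. ?g' (X i \<omega>, Y i \<omega>))"
        proof (cases "\<omega> \<in> Stay x m \<and> (\<forall>i<m. (X i \<omega>, Y i \<omega>) \<in> BK K)")
          case True
          have Sle: "(\<Sum>i<m. X i \<omega>) \<le> x"
          proof (cases "m = 0")
            case False
            then have "m \<in> {1..m}" by auto
            with True show ?thesis by (auto simp: Stay_def)
          qed (use x0 in simp)
          have G: "G m \<omega> = ennreal (exp (\<Sum>i<m. t * Y i \<omega> - s * X i \<omega>))"
            using True by (simp add: G_def g_def prod_gK)
          have P: "(\<Prod>i<m. ?g' (X i \<omega>, Y i \<omega>)) = ennreal (exp (\<Sum>i<m. t * Y i \<omega> - h * X i \<omega>))"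
            by (simp add: prod_exp_ennreal)
          have eqs: "(\<Sum>i<m. t * Y i \<omega> - s * X i \<omega>) = (\<Sum>i<m. t * Y i \<omega> - h * X i \<omega>) + (h - s) * (\<Sum>i<m. X i \<omega>)"
            by (simp add: sum_subtractf sum_distrib_left algebra_simps)
          have "(h - s) * (\<Sum>i<m. X i \<omega>) \<le> (h - s) * x"
            using Sle sh by (intro mult_left_mono) auto
          then have "exp (\<Sum>i<m. t * Y i \<omega> - s * X i \<omega>) \<le> exp ((h - s) * x) * exp (\<Sum>i<m. t * Y i \<omega> - h * X i \<omega>)"
            unfolding eqs by (simp add: exp_add[symmetric] add.commute)
          then show ?thesis using True unfolding G P
            by (simp add: ennreal_mult[symmetric] ennreal_leI del: ennreal_mult)
        next
          case False
          then have "G m \<omega> * indicator (Stay x m) \<omega> = 0"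
            by (auto simp: G_def g_def prod_gK)
          then show ?thesis by (simp only: zero_le)
        qed
      qed
      also have "\<dots> = ennreal (exp ((h - s) * x)) * (\<integral>\<^sup>+\<omega>. (\<Prod>i<m. ?g' (X i \<omega>, Y i \<omega>)) \<partial>M)"
        by (rule nn_integral_cmult) (rule Pmeas[OF gmeas])
      also have "(\<integral>\<^sup>+\<omega>. (\<Prod>i<m. ?g' (X i \<omega>, Y i \<omega>)) \<partial>M) = Lap M (X 0) (Y 0) t h ^ m"
        by (subst prod_int[OF gmeas]) (simp add: Lap_def)
      also have "ennreal (exp ((h - s) * x)) * Lap M (X 0) (Y 0) t h ^ m \<le> ennreal (exp ((h - s) * x)) * 1"
        using power_mono[OF Lh zero_le, of m] by (intro mult_left_mono) simp_all
      finally show ?thesis by simp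
    qed
    have Afin: "A n < \<infinity>" for n
    proof -
      have "\<phi> ^ n = ennreal (L ^ n)" using L by (simp add: ennreal_power)
      then have "A n \<le> ennreal (L ^ n)" using A_le[of n] by simp
      then show ?thesis unfolding infinity_ennreal_def using ennreal_less_top[of "L ^ n"] by (rule le_less_trans)
    qed
    have Efin: "E n < \<infinity>" for n
    proof -
      have "E n \<le> E n + A (Suc n)" by simp
      also have "\<dots> = A n * \<phi>" by (rule rec)
      also have "\<dots> < \<infinity>" using Afin[of n] L by (simp add: ennreal_mult_less_top)
      finally show ?thesis .
    qed
    define a where "a n = enn2real (A n)" for n
    define e where "e n = enn2real (E n)" for n
    have a0: "a 0 = 1" by (simp add: a_def A0)
    have ae0: "0 \<le> a n" "0 \<le> e n" for n by (simp_all add: a_def e_def)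
    have rec': "e n + a (Suc n) = a n * L" for n
    proof -
      have "enn2real (E n + A (Suc n)) = enn2real (A n * \<phi>)" using rec[of n] by simp
      then show ?thesis using Afin Efin L unfolding a_def e_def
        by (simp add: enn2real_plus enn2real_mult)
    qed
    have tel: "(\<Sum>n<m. e n / L ^ Suc n) = 1 - a m / L ^ m" for m
    proof (induction m)
      case 0 then show ?case by (simp add: a0)
    next
      case (Suc m)
      have "e m = a m * L - a (Suc m)" using rec'[of m] by simp
      then have "e m / L ^ Suc m = a m / L ^ m - a (Suc m) / L ^ Suc m"
        using L1' by (simp add: field_simps)
      then show ?case using Suc by simp
    qed
    have am: "a m \<le> exp ((h - s) * x)" for m
      using A_exp[of m] Afin[of m] unfolding a_def
      by (metis enn2real_ennreal enn2real_mono exp_ge_zero ennreal_less_top)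
    obtain m where m: "2 * exp ((h - s) * x) < L ^ m" using real_arch_pow[OF L1'] by blast
    have Lpos: "0 < L ^ k" for k using L1' by simp
    have "a m / L ^ m < 1 / 2"
    proof -
      have "a m / L ^ m \<le> exp ((h - s) * x) / L ^ m"
        using am[of m] Lpos[of m] by (simp add: divide_right_mono)
      also have "\<dots> < 1 / 2" using m Lpos[of m] by (simp add: field_simps)
      finally show ?thesis .
    qed
    then have half: "1 / 2 < (\<Sum>n<m. e n / L ^ Suc n)" using tel[of m] by simp
    have "(\<Sum>n<m. e n / L ^ Suc n) \<le> (\<Sum>n<m. e n)"
    proof (rule sum_mono)
      fix n
      have "1 \<le> L ^ Suc n" using L1' one_le_power[of L "Suc n"] by linarith
      then show "e n / L ^ Suc n \<le> e n" using ae0(2)[of n] by (simp add: divide_le_eq mult_le_cancel_left1 mult_left_mono[of 1 "L^Suc n" "e n", simplified])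
    qed
    with half have sum_e: "1 / 2 \<le> (\<Sum>n<m. e n)" by simp
    have pw: "ennreal (\<kappa> * exp (s * x)) * (G (Suc n) \<omega> * indicator (Ev x n) \<omega>)
        \<le> ennreal (exp (t * (\<Sum>i<n. Y i \<omega>))) * indicator (Ev x n) \<omega>" if "\<omega> \<in> space M" for n \<omega>
    proof (cases "\<omega> \<in> Ev x n \<and> (\<forall>i<Suc n. (X i \<omega>, Y i \<omega>) \<in> BK K)")
      case True
      then have Ev: "\<omega> \<in> Ev x n" and BKn: "(X n \<omega>, Y n \<omega>) \<in> BK K" by auto
      have G: "G (Suc n) \<omega> = ennreal (exp (\<Sum>i<Suc n. t * Y i \<omega> - s * X i \<omega>))"
        using True by (simp add: G_def g_def prod_gK del: sum.lessThan_Suc prod.lessThan_Suc)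
      have ax: "\<bar>X n \<omega>\<bar> \<le> K" and ay: "\<bar>Y n \<omega>\<bar> \<le> K" using BKn by (auto simp: BK_def)
      have d0: "0 \<le> x - (\<Sum>i<n. X i \<omega>)" using Ev_le[OF Ev x0] by simp
      have d1: "x - (\<Sum>i<n. X i \<omega>) \<le> K" using Ev_gt[OF Ev] ax by linarith
      have "s * (x - (\<Sum>i<n. X i \<omega>)) \<le> \<bar>s\<bar> * K"
      proof -
        have "s * (x - (\<Sum>i<n. X i \<omega>)) \<le> \<bar>s\<bar> * (x - (\<Sum>i<n. X i \<omega>))"
          using d0 by (intro mult_right_mono) auto
        also have "\<dots> \<le> \<bar>s\<bar> * K" using d1 by (intro mult_left_mono) auto
        finally show ?thesis .
      qed
      moreover have "t * Y n \<omega> - s * X n \<omega> \<le> (\<bar>t\<bar> + \<bar>s\<bar>) * K" by (rule lin_bound[OF ax ay])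
      moreover have "(\<Sum>i<Suc n. t * Y i \<omega> - s * X i \<omega>) = t * (\<Sum>i<n. Y i \<omega>) - s * (\<Sum>i<n. X i \<omega>) + (t * Y n \<omega> - s * X n \<omega>)"
        by (simp add: sum_subtractf sum_distrib_left)
      ultimately have "- (\<bar>s\<bar> * K + (\<bar>t\<bar> + \<bar>s\<bar>) * K) + s * x + (\<Sum>i<Suc n. t * Y i \<omega> - s * X i \<omega>) \<le> t * (\<Sum>i<n. Y i \<omega>)"
        by (simp add: algebra_simps)
      then have "\<kappa> * exp (s * x) * exp (\<Sum>i<Suc n. t * Y i \<omega> - s * X i \<omega>) \<le> exp (t * (\<Sum>i<n. Y i \<omega>))"
        unfolding \<kappa>_def by (simp add: exp_add[symmetric] del: sum.lessThan_Suc)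
      then show ?thesis using Ev unfolding G
        by (simp add: ennreal_mult[symmetric] ennreal_leI \<kappa>0 less_imp_le del: ennreal_mult sum.lessThan_Suc)
    next
      case False
      then have "G (Suc n) \<omega> * indicator (Ev x n) \<omega> = 0"
        by (auto simp: G_def g_def prod_gK simp del: prod.lessThan_Suc)
      then show ?thesis by (simp only: mult_zero_right zero_le)
    qed
    have "ennreal (\<kappa> / 2 * exp (s * x)) \<le> ennreal (\<kappa> * exp (s * x)) * ennreal (\<Sum>n<m. e n)"
      using sum_e \<kappa>0 by (simp add: ennreal_mult[symmetric] ennreal_leI del: ennreal_mult)
    also have "ennreal (\<Sum>n<m. e n) = (\<Sum>n<m. E n)"
      using Efin by (simp add: e_def sum_ennreal[symmetric] ae0 del: sum_ennreal)
    also have "ennreal (\<kappa> * exp (s * x)) * (\<Sum>n<m. E n) = (\<Sum>n<m. ennreal (\<kappa> * exp (s * x)) * E n)"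
      by (simp add: sum_distrib_left)
    also have "\<dots> \<le> (\<Sum>n<m. \<integral>\<^sup>+\<omega>. ennreal (exp (t * (\<Sum>i<n. Y i \<omega>))) * indicator (Ev x n) \<omega> \<partial>M)"
    proof (rule sum_mono)
      fix n
      have "ennreal (\<kappa> * exp (s * x)) * E n = (\<integral>\<^sup>+\<omega>. ennreal (\<kappa> * exp (s * x)) * (G (Suc n) \<omega> * indicator (Ev x n) \<omega>) \<partial>M)"
        unfolding E_def by (rule nn_integral_cmult[symmetric]) measurable
      also have "\<dots> \<le> (\<integral>\<^sup>+\<omega>. ennreal (exp (t * (\<Sum>i<n. Y i \<omega>))) * indicator (Ev x n) \<omega> \<partial>M)"
        by (intro nn_integral_mono pw)
      finally show "ennreal (\<kappa> * exp (s * x)) * E n \<le> \<dots>" .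
    qed
    also have "\<dots> \<le> (\<Sum>n. \<integral>\<^sup>+\<omega>. ennreal (exp (t * (\<Sum>i<n. Y i \<omega>))) * indicator (Ev x n) \<omega> \<partial>M)"
      by (rule sum_le_suminf) auto
    also have "\<dots> = Mgf M X Y x t" by (rule Mgf_decomp[OF drift, symmetric])
    finally show "ennreal (\<kappa> / 2 * exp (s * x)) \<le> Mgf M X Y x t" .
  qed
  moreover have "0 < \<kappa> / 2" using \<kappa>0 by simp
  ultimately show ?thesis by blast
qed

end

theorem lemma6p4:
  fixes M :: "'a measure" and X Y :: "nat \<Rightarrow> 'a \<Rightarrow> real" and t :: real
  assumes P: "prob_space M"
    and measX: "\<And>n. X n \<in> borel_measurable M"
    and measY: "\<And>n. Y n \<in> borel_measurable M"
    and indep: "prob_space.indep_vars M (\<lambda>_. borel) (\<lambda>n \<omega>. (X n \<omega>, Y n \<omega>)) UNIV"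
    and ident: "\<And>n. distr M borel (\<lambda>\<omega>. (X n \<omega>, Y n \<omega>)) = distr M borel (\<lambda>\<omega>. (X 0 \<omega>, Y 0 \<omega>))"
    and nondegX: "\<not> (\<exists>c. AE \<omega> in M. X 0 \<omega> = c)"
    and nondegY: "\<not> (\<exists>c. AE \<omega> in M. Y 0 \<omega> = c)"
    and drift: "AE \<omega> in M. (SUP n\<in>{1..}. ereal (\<Sum>i<n. X i \<omega>)) = \<infinity>"
    and hbeta: "betaX M (X 0) < hfun M (X 0) (Y 0) t"
    and hfin: "hfun M (X 0) (Y 0) t < \<infinity>"
    and heq: "Lap M (X 0) (Y 0) t (real_of_ereal (hfun M (X 0) (Y 0) t)) = 1"
    and cases: "measure M {\<omega>\<in>space M. X 0 \<omega> \<ge> 0} = 1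
      \<or> (interior (Dset M (X 0) (Y 0) t) \<noteq> {} \<and>
         (\<forall>q>0. cond_exp_event M
             (\<lambda>\<omega>. exp (q * (t * Y 0 \<omega> - min 0 (real_of_ereal (hfun M (X 0) (Y 0) t)) * X 0 \<omega>)))
             {\<omega>\<in>space M. X 0 \<omega> > 0} < \<infinity>))"
  shows "(\<forall>\<^sub>F x in at_top. Mgf M X Y x t < \<infinity>) \<and>
    ((\<lambda>x. ln (enn2real (Mgf M X Y x t)) / x) \<longlongrightarrow> real_of_ereal (hfun M (X 0) (Y 0) t)) at_top"
  proof -
  interpret iidsetup M X Y
    unfolding iidsetup_def iidsetup_axioms_def using P measX measY indep ident by auto
  define H where "H = hfun M (X 0) (Y 0) t"
  have "H \<noteq> \<infinity>" using hfin by (simp add: H_def)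
  moreover have "H \<noteq> -\<infinity>" using hbeta by (auto simp: H_def)
  ultimately obtain h where hH: "H = ereal h" by (cases H) auto
  have hr: "real_of_ereal (hfun M (X 0) (Y 0) t) = h" using hH by (simp add: H_def)
  have Lh: "Lap M (X 0) (Y 0) t h = 1" using heq hr by simp
  have below: "1 < Lap M (X 0) (Y 0) t s" if "s < h" for s
  proof (rule ccontr)
    assume "\<not> 1 < Lap M (X 0) (Y 0) t s"
    then have "s \<in> Dset M (X 0) (Y 0) t" by (simp add: Dset_def not_less)
    then have "hfun M (X 0) (Y 0) t \<le> ereal s" unfolding hfun_def by (intro Inf_lower) simp
    with hH that show False by (simp add: H_def)
  qed
  have nd: "\<not> (AE \<omega> in M. X 0 \<omega> = 0)" using nondegX by blast
  have mX0[measurable]: "X 0 \<in> borel_measurable M" and mY0[measurable]: "Y 0 \<in> borel_measurable M"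
    using measX measY by auto
  have exd: "\<exists>d>h. Lap M (X 0) (Y 0) t d \<le> 1"
  proof (cases "measure M {\<omega>\<in>space M. X 0 \<omega> \<ge> 0} = 1")
    case True
    note c1 = True
    have ae: "AE \<omega> in M. X 0 \<omega> \<ge> 0" using prob_space.AE_prob_1[OF P c1] by auto
    have "Lap M (X 0) (Y 0) t (h + 1) \<le> Lap M (X 0) (Y 0) t h"
      unfolding Lap_def
      by (rule nn_integral_mono_AE) (use ae in \<open>eventually_elim, auto intro!: ennreal_leI simp: algebra_simps\<close>)
    then show ?thesis using Lh by (intro exI[of _ "h + 1"]) simp
  next
    case False
    then have "interior (Dset M (X 0) (Y 0) t) \<noteq> {}" using cases by blast
    then obtain p where "p \<in> interior (Dset M (X 0) (Y 0) t)" by blast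
    then obtain e where e: "e > 0" "ball p e \<subseteq> Dset M (X 0) (Y 0) t" by (auto simp: mem_interior)
    have "p \<in> Dset M (X 0) (Y 0) t" using e by auto
    then have "ereal h \<le> ereal p" using hH unfolding H_def hfun_def by (metis Inf_lower imageI)
    moreover have "p + e / 2 \<in> Dset M (X 0) (Y 0) t" using e by (intro subsetD[OF e(2)]) (simp add: dist_real_def)
    ultimately show ?thesis using e by (intro exI[of _ "p + e / 2"]) (auto simp: Dset_def)
  qed
  then obtain d where d: "h < d" "Lap M (X 0) (Y 0) t d \<le> 1" by blast
  have above: "\<exists>s. h < s \<and> s < h + \<epsilon> \<and> Lap M (X 0) (Y 0) t s < 1" if eps: "0 < \<epsilon>" for \<epsilon>
  proof -
    define b where "b = min d (h + \<epsilon>)"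
    have hb: "h < b" "b \<le> d" "b \<le> h + \<epsilon>" using d eps by (auto simp: b_def)
    define l where "l = (b - h) / (d - h)"
    have l: "0 \<le> l" "l \<le> 1" using hb d by (auto simp: l_def divide_le_eq)
    have ldh: "l * (d - h) = b - h" using d by (simp add: l_def)
    have "(1 - l) * h + l * d = h + l * (d - h)" by (simp add: algebra_simps)
    then have "(1 - l) * h + l * d = b" using ldh by simp
    then have Lb: "Lap M (X 0) (Y 0) t b \<le> 1"
      using lap_convex[OF P mX0 mY0 _ d(2) l, of h] Lh by simp
    have "Lap M (X 0) (Y 0) t ((h + b) / 2) < 1"
      using lap_mid_strict[OF P mX0 mY0 nd _ _ Lb, of h] Lh hb by simp
    moreover have "h < (h + b) / 2" "(h + b) / 2 < h + \<epsilon>" using hb by auto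
    ultimately show ?thesis by blast
  qed
  have upper: "\<exists>s C. h < s \<and> s < h + \<epsilon> \<and> 0 \<le> C \<and> (\<forall>x\<ge>0. Mgf M X Y x t \<le> ennreal (C * exp (s * x)))"
    if eps: "0 < \<epsilon>" for \<epsilon>
  proof -
    obtain s where s: "h < s" "s < h + \<epsilon>" "Lap M (X 0) (Y 0) t s < 1" using above[OF eps] by blast
    have tl: "0 \<le> s \<or> (\<integral>\<^sup>+\<omega>. ennreal (exp (- s * X 0 \<omega>)) \<partial>M) < \<infinity>"
    proof (cases "0 \<le> s")
      case False
      have "betaX M (X 0) < ereal h" using hbeta hH by (simp add: H_def)
      then obtain r where r: "betaX M (X 0) < ereal r" "ereal r < ereal h" using ereal_dense2 by blast
      have "(\<integral>\<^sup>+\<omega>. ennreal (exp ((- s) * X 0 \<omega>)) \<partial>M) < \<infinity>"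
        using False s r by (intro tail_int[OF P mX0 r(1)]) auto
      then show ?thesis by simp
    qed simp
    from upper_bound[OF drift s(3) tl] obtain C where "C \<ge> 0" "\<forall>x\<ge>0. Mgf M X Y x t \<le> ennreal (C * exp (s * x))"
      by blast
    with s show ?thesis by blast
  qed
  have lower: "\<exists>s c. h - \<epsilon> < s \<and> s < h \<and> 0 < c \<and> (\<forall>x\<ge>0. ennreal (c * exp (s * x)) \<le> Mgf M X Y x t)"
    if eps: "0 < \<epsilon>" for \<epsilon>
  proof -
    have "h - \<epsilon> / 2 < h" using eps by simp
    from lower_bound[OF drift below[OF this] _ this] Lh obtain c where
      "c > 0" "\<forall>x\<ge>0. ennreal (c * exp ((h - \<epsilon> / 2) * x)) \<le> Mgf M X Y x t" by auto
    then show ?thesis using eps by (intro exI[of _ "h - \<epsilon> / 2"] exI[of _ c]) auto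
  qed
  show ?thesis
  proof
    obtain s C where sC: "0 \<le> C" "\<forall>x\<ge>0. Mgf M X Y x t \<le> ennreal (C * exp (s * x))"
      using upper[of 1] by auto
    show "\<forall>\<^sub>F x in at_top. Mgf M X Y x t < \<infinity>"
      unfolding eventually_at_top_linorder
    proof (intro exI[of _ 0] allI impI)
      fix x :: real assume "0 \<le> x"
      then have "Mgf M X Y x t \<le> ennreal (C * exp (s * x))" using sC by blast
      then show "Mgf M X Y x t < \<infinity>" unfolding infinity_ennreal_def by (rule le_less_trans) simp
    qed
  next
    show "((\<lambda>x. ln (enn2real (Mgf M X Y x t)) / x) \<longlongrightarrow> real_of_ereal (hfun M (X 0) (Y 0) t)) at_top"
      unfolding hr tendsto_iff
    proof (intro allI impI)
      fix e :: real assume e: "0 < e"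
      obtain s2 C2 where u: "h < s2" "s2 < h + e / 2" "0 \<le> C2" "\<forall>x\<ge>0. Mgf M X Y x t \<le> ennreal (C2 * exp (s2 * x))"
        using upper[of "e / 2"] e by auto
      obtain s1 c1 where l: "h - e / 2 < s1" "s1 < h" "0 < c1" "\<forall>x\<ge>0. ennreal (c1 * exp (s1 * x)) \<le> Mgf M X Y x t"
        using lower[of "e / 2"] e by auto
      define B where "B = max 1 (2 * (\<bar>ln c1\<bar> + \<bar>ln C2\<bar>) / e + 1)"
      show "\<forall>\<^sub>F x in at_top. dist (ln (enn2real (Mgf M X Y x t)) / x) h < e"
        unfolding eventually_at_top_linorder
      proof (intro exI[of _ B] allI impI)
        fix x assume xB: "B \<le> x"
        then have x1: "1 \<le> x" and x0: "0 \<le> x" by (auto simp: B_def)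
        have xb: "2 * (\<bar>ln c1\<bar> + \<bar>ln C2\<bar>) / e < x" using xB by (simp add: B_def)
        then have xb': "\<bar>ln c1\<bar> + \<bar>ln C2\<bar> < e / 2 * x" using e by (simp add: field_simps)
        define m where "m = enn2real (Mgf M X Y x t)"
        have up: "Mgf M X Y x t \<le> ennreal (C2 * exp (s2 * x))" using u x0 by blast
        have lo: "ennreal (c1 * exp (s1 * x)) \<le> Mgf M X Y x t" using l x0 by blast
        have fin: "Mgf M X Y x t < \<top>" using up by (rule le_less_trans) simp
        have m1: "c1 * exp (s1 * x) \<le> m"
          using enn2real_mono[OF lo fin] l(3) unfolding m_def by simp
        have m2: "m \<le> C2 * exp (s2 * x)"
          using enn2real_mono[OF up] u(3) unfolding m_def by simp
        have "0 < c1 * exp (s1 * x)" using l(3) by simp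
        then have mpos: "0 < m" using m1 by linarith
        have C2pos: "0 < C2"
        proof (rule ccontr)
          assume "\<not> 0 < C2"
          then have "C2 = 0" using u(3) by simp
          then show False using m2 mpos by simp
        qed
        have "ln (c1 * exp (s1 * x)) \<le> ln m" using m1 l(3) mpos by (subst ln_le_cancel_iff) auto
        then have lm1: "ln c1 + s1 * x \<le> ln m" using l(3) by (simp add: ln_mult)
        have "ln m \<le> ln (C2 * exp (s2 * x))" using m2 mpos C2pos by (subst ln_le_cancel_iff) auto
        then have lm2: "ln m \<le> ln C2 + s2 * x" using C2pos by (simp add: ln_mult)
        have a1: "(s1 - h) * x \<ge> - (e / 2) * x" using l(1) x0 by (intro mult_right_mono) auto
        have a2: "(s2 - h) * x \<le> (e / 2) * x" using u(2) x0 by (intro mult_right_mono) auto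
        have "\<bar>ln m - h * x\<bar> < e * x"
          using lm1 lm2 a1 a2 xb' by (simp add: algebra_simps abs_less_iff) linarith
        then have "\<bar>ln m / x - h\<bar> < e" using x1 by (simp add: field_simps abs_divide abs_less_iff)
        then show "dist (ln (enn2real (Mgf M X Y x t)) / x) h < e"
          unfolding m_def dist_real_def .
      qed
    qed
  qed
qed

end
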